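(* Let $\mathcal P=\{p_0,\dots,p_6\}$ be a typical heptagonal $7$-configuration with a cyclic numeration (indices modulo $7$). Then $d(p_i)+d(p_{i+1})=5$ if the edge $[p_i,p_{i+1}]$ is internal, and $d(p_i)+d(p_{i+1})=7$ if it is external.
   Context: A $7$-configuration is a set of $7$ distinct points in $\mathbb{RP}^2$; it is typical if no three of its points are collinear and no six lie on a common conic. It is heptagonal if there is a line $\ell$ disjoint from it such that its points are the vertices of a convex heptagon in $\mathbb{RP}^2\smallsetminus\ell$; a cyclic numeration lists the points as consecutive vertices of this heptagon. For $i\ne j$ let $Q_{i,j}$ be the conic through the five points of $\mathcal P\smallsetminus\{p_i,p_j\}$, and set $d_{i,j}=0$ if $p_i$ lies inside $Q_{i,j}$ and $d_{i,j}=1$ if outside ("inside" = the component of the complement homeomorphic to a disc). The dominance index is $d(p_i)=\sum_{j\ne i}d_{i,j}$. The edge $[p_i,p_{i+1}]$ is internal if $d_{i,i+1}=d_{i+1,i}=0$ and external if $d_{i,i+1}=d_{i+1,i}=1$. *)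

theory Defs
  imports "HOL-Analysis.Analysis"
begin

text \<open>Points of RP^2 are represented by nonzero vectors of real^3 (homogeneous
coordinates). A 7-configuration is given by representatives p 0, ..., p 6.\<close>

definition det3 :: "real^3 \<Rightarrow> real^3 \<Rightarrow> real^3 \<Rightarrow> real" where
  "det3 u v w =
     u$1 * (v$2 * w$3 - v$3 * w$2) - u$2 * (v$1 * w$3 - v$3 * w$1)
     + u$3 * (v$1 * w$2 - v$2 * w$1)"

definition proj_eq :: "real^3 \<Rightarrow> real^3 \<Rightarrow> bool" where
  "proj_eq u v \<longleftrightarrow> (\<exists>c::real. c \<noteq> 0 \<and> v = c *\<^sub>R u)"

definition config7 :: "(nat \<Rightarrow> real^3) \<Rightarrow> bool" where
  "config7 p \<longleftrightarrow> (\<forall>i<7. p i \<noteq> 0) \<and>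
     (\<forall>i<7. \<forall>j<7. i \<noteq> j \<longrightarrow> \<not> proj_eq (p i) (p j))"

text \<open>Quadratic form of a (symmetric) 3x3 matrix; conics are zero sets of
nonzero quadratic forms.\<close>
definition qf :: "real^3^3 \<Rightarrow> real^3 \<Rightarrow> real" where
  "qf Q v = v \<bullet> (Q *v v)"

definition conic_through :: "real^3^3 \<Rightarrow> (real^3) set \<Rightarrow> bool" where
  "conic_through Q S \<longleftrightarrow> Q \<noteq> 0 \<and> transpose Q = Q \<and> (\<forall>v\<in>S. qf Q v = 0)"

definition typical7 :: "(nat \<Rightarrow> real^3) \<Rightarrow> bool" where
  "typical7 p \<longleftrightarrow> config7 p \<and>
     (\<forall>i<7. \<forall>j<7. \<forall>k<7. i \<noteq> j \<and> j \<noteq> k \<and> i \<noteq> k \<longrightarrow> det3 (p i) (p j) (p k) \<noteq> 0) \<and>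
     (\<forall>S. S \<subseteq> {0..<7} \<and> card S = 6 \<longrightarrow> \<not> (\<exists>Q. conic_through Q (p ` S)))"

text \<open>Affine chart RP^2 minus the line {a . v = 0}: the point [v] is identified with
the point v/(a . v) of the affine plane {x. a . x = 1}.\<close>
definition chart :: "real^3 \<Rightarrow> real^3 \<Rightarrow> real^3" where
  "chart a v = (1 / (a \<bullet> v)) *\<^sub>R v"

text \<open>p 0, ..., p 6 (indices mod 7) are consecutive vertices of a convex heptagon in
RP^2 minus the line a: for each edge [p i, p (i+1)], all other vertices lie strictly
on one side of the line through it (inside the affine plane {a . x = 1}, the side of
x w.r.t. the line through u, w is the sign of det3 u w x).\<close>
definition cyclic_heptagonal :: "(nat \<Rightarrow> real^3) \<Rightarrow> bool" where
  "cyclic_heptagonal p \<longleftrightarrow> (\<exists>a::real^3. a \<noteq> 0 \<and> (\<forall>i<7. a \<bullet> p i \<noteq> 0) \<and>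
     (\<forall>i<7.
        (\<forall>k<7. k \<noteq> i \<and> k \<noteq> (i+1) mod 7 \<longrightarrow>
            det3 (chart a (p i)) (chart a (p ((i+1) mod 7))) (chart a (p k)) > 0) \<or>
        (\<forall>k<7. k \<noteq> i \<and> k \<noteq> (i+1) mod 7 \<longrightarrow>
            det3 (chart a (p i)) (chart a (p ((i+1) mod 7))) (chart a (p k)) < 0)))"

text \<open>Inside of a nondegenerate real conic {qf Q = 0}: the disc component of its
complement, i.e. the points where qf Q has the sign of det Q (e.g. for
x^2+y^2-z^2, det = -1, the disc is x^2+y^2 < z^2).\<close>
definition inside_conic :: "real^3^3 \<Rightarrow> real^3 \<Rightarrow> bool" where
  "inside_conic Q v \<longleftrightarrow> det Q * qf Q v > 0"

definition Qc :: "(nat \<Rightarrow> real^3) \<Rightarrow> nat \<Rightarrow> nat \<Rightarrow> real^3^3" where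
  "Qc p i j = (SOME Q. conic_through Q (p ` ({0..<7} - {i, j})))"

definition dd :: "(nat \<Rightarrow> real^3) \<Rightarrow> nat \<Rightarrow> nat \<Rightarrow> nat" where
  "dd p i j = (if inside_conic (Qc p i j) (p i) then 0 else 1)"

definition dom_index :: "(nat \<Rightarrow> real^3) \<Rightarrow> nat \<Rightarrow> nat" where
  "dom_index p i = (\<Sum>j\<in>{0..<7} - {i}. dd p i j)"

definition internal_edge :: "(nat \<Rightarrow> real^3) \<Rightarrow> nat \<Rightarrow> bool" where
  "internal_edge p i \<longleftrightarrow> dd p i ((i+1) mod 7) = 0 \<and> dd p ((i+1) mod 7) i = 0"

definition external_edge :: "(nat \<Rightarrow> real^3) \<Rightarrow> nat \<Rightarrow> bool" where
  "external_edge p i \<longleftrightarrow> dd p i ((i+1) mod 7) = 1 \<and> dd p ((i+1) mod 7) i = 1"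

end

theory Submission
  imports Defs
begin

definition bl :: "real^3^3 \<Rightarrow> real^3 \<Rightarrow> real^3 \<Rightarrow> real" where
  "bl Q y z = y \<bullet> (Q *v z)"

lemma qf_bl: "qf Q v = bl Q v v" by (simp add: qf_def bl_def)

lemma sym_entry: "transpose Q = Q \<Longrightarrow> Q$i$j = Q$j$i"
  by (metis transpose_def vec_lambda_beta)

lemma bl_sym: "transpose Q = Q \<Longrightarrow> bl Q y z = bl Q z y"
  apply (simp add: bl_def inner_vec_def matrix_vector_mult_def sum_3)
  apply (simp add: sym_entry[of Q] algebra_simps)
  done

lemma det3_R: "det (vector [A,B,C] :: real^3^3) = det3 A B C"
  by (simp add: det_3 det3_def algebra_simps)

lemma entry: "((R::real^3^3) ** Q ** transpose R)$i$j = bl Q (R$i) (R$j)"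
  by (simp add: matrix_matrix_mult_def transpose_def bl_def inner_vec_def matrix_vector_mult_def sum_3 algebra_simps)

lemma det_zero_diag:
  assumes "transpose Q = Q" "qf Q A = 0" "qf Q B = 0" "qf Q C = 0"
  shows "(det3 A B C)^2 * det Q = 2 * bl Q A B * bl Q B C * bl Q A C"
proof -
  define R where "R = (vector [A,B,C] :: real^3^3)"
  have "det (R ** Q ** transpose R) = det R * det Q * det R"
    by (simp add: det_mul)
  also have "\<dots> = (det3 A B C)^2 * det Q" unfolding R_def det3_R by (simp add: power2_eq_square)
  finally have 1: "det (R ** Q ** transpose R) = (det3 A B C)^2 * det Q" .
  have "det (R ** Q ** transpose R) = 2 * bl Q A B * bl Q B C * bl Q A C"
    unfolding det_3 entry using assms
    by (simp add: R_def qf_bl bl_sym[OF assms(1), of B A] bl_sym[OF assms(1), of C A] bl_sym[OF assms(1), of C B])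
  with 1 show ?thesis by simp
qed

definition symm :: "real^3 \<Rightarrow> real^3 \<Rightarrow> real^3^3" where
  "symm g h = (\<chi> i j. (g$i*h$j + g$j*h$i)/2)"

lemma bl_symm: "bl (symm g h) y z = ((g\<bullet>y)*(h\<bullet>z) + (g\<bullet>z)*(h\<bullet>y))/2"
  by (simp add: symm_def bl_def inner_vec_def matrix_vector_mult_def sum_3 algebra_simps add_divide_distrib)

lemma transpose_symm: "transpose (symm g h) = symm g h"
  by (simp add: symm_def transpose_def vec_eq_iff algebra_simps)

definition cr :: "real^3 \<Rightarrow> real^3 \<Rightarrow> real^3" where
  "cr u v = vector [u$2 * v$3 - u$3 * v$2, u$3 * v$1 - u$1 * v$3, u$1 * v$2 - u$2 * v$1]"

lemma det3_cr: "det3 u v w = cr u v \<bullet> w"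
  by (simp add: cr_def det3_def inner_vec_def sum_3 algebra_simps)

lemma bl_lin: "bl (a *\<^sub>R Q1 - b *\<^sub>R Q2) y z = a * bl Q1 y z - b * bl Q2 y z"
  by (simp add: bl_def algebra_simps scaleR_matrix_vector_assoc[symmetric] inner_diff_right)

lemma bl_scale: "bl (a *\<^sub>R Q1) y z = a * bl Q1 y z"
  by (simp add: bl_def scaleR_matrix_vector_assoc[symmetric])

lemma transpose_diff': "transpose (A - B) = transpose A - (transpose B :: real^3^3)"
  by (simp add: transpose_def vec_eq_iff)

lemma qf_lin: "qf (a *\<^sub>R Q1 - b *\<^sub>R Q2) v = a * qf Q1 v - b * qf Q2 v"
  by (simp add: qf_bl bl_lin)

lemma qf_scale: "qf (a *\<^sub>R Q1) v = a * qf Q1 v"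
  by (simp add: qf_bl bl_scale)

lemma uniq:
  assumes no6: "\<And>Q. conic_through Q (insert U S) \<Longrightarrow> False"
    and q: "conic_through Q S" and q': "conic_through Q' S"
  shows "\<exists>c. c \<noteq> 0 \<and> Q = c *\<^sub>R Q' \<and> qf Q' U \<noteq> 0"
proof -
  define \<alpha> where "\<alpha> = qf Q' U"
  define \<beta> where "\<beta> = qf Q U"
  have a0: "\<alpha> \<noteq> 0"
  proof
    assume "\<alpha> = 0"
    then have "conic_through Q' (insert U S)" using q' by (auto simp: conic_through_def \<alpha>_def)
    then show False by (rule no6)
  qed
  define R where "R = \<beta> *\<^sub>R Q' - \<alpha> *\<^sub>R Q"
  have "R = 0"
  proof (rule ccontr)
    assume "R \<noteq> 0"
    moreover have "transpose R = R" using q q'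
      by (simp add: R_def transpose_diff' transpose_scalar conic_through_def)
    moreover have "\<forall>v\<in>insert U S. qf R v = 0" using q q'
      by (auto simp: R_def qf_lin conic_through_def \<alpha>_def \<beta>_def)
    ultimately have "conic_through R (insert U S)" by (simp add: conic_through_def)
    then show False by (rule no6)
  qed
  then have "\<alpha> *\<^sub>R Q = \<beta> *\<^sub>R Q'" by (simp add: R_def)
  then have "Q = (\<beta>/\<alpha>) *\<^sub>R Q'" using a0
    by (metis (no_types, lifting) divide_inverse_commute scaleR_scaleR scaleR_one
        right_inverse mult.commute)
  moreover have "\<beta>/\<alpha> \<noteq> 0" using q calculation by (auto simp: conic_through_def)
  ultimately show ?thesis using a0 \<alpha>_def by blast
qed

lemma det3_rep[simp]: "det3 x y x = 0" "det3 x x y = 0" "det3 x y y = 0"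
  by (simp_all add: det3_def algebra_simps)

lemma det3_swap: "det3 x z y = - det3 x y z" "det3 y x z = - det3 x y z"
  by (simp_all add: det3_def algebra_simps)
lemma det3_cyc: "det3 y z x = det3 x y z"
  by (simp_all add: det3_def algebra_simps)

lemma pluecker: "det3 C D Y * det3 E F Y - det3 C E Y * det3 D F Y + det3 C F Y * det3 D E Y = 0"
  by (simp add: det3_def algebra_simps)

lemma inside_bl:
  assumes "conic_through Q S" "A \<in> S" "B \<in> S" "C \<in> S" "det3 A B C \<noteq> 0"
  shows "inside_conic Q X \<longleftrightarrow> bl Q A B * bl Q B C * bl Q A C * qf Q X > 0"
proof -
  have h: "(det3 A B C)^2 * det Q = 2 * bl Q A B * bl Q B C * bl Q A C"
    using assms by (intro det_zero_diag) (auto simp: conic_through_def)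
  have p: "(det3 A B C)^2 > 0" using assms(5) by simp
  have "inside_conic Q X \<longleftrightarrow> (det3 A B C)^2 * (det Q * qf Q X) > 0"
    unfolding inside_conic_def using p zero_less_mult_pos zero_less_mult_iff by metis
  also have "\<dots> \<longleftrightarrow> 2 * (bl Q A B * bl Q B C * bl Q A C * qf Q X) > 0"
    using h by (simp add: mult.assoc[symmetric])
  finally show ?thesis by (simp add: mult_ac)
qed

lemma G:
  fixes U V C D E F :: "real^3" and Q1 Q2 :: "real^3^3"
  assumes no6: "\<And>Q. conic_through Q {U,V,C,D,E,F} \<Longrightarrow> False"
  and q1: "conic_through Q1 {V,C,D,E,F}" and q2: "conic_through Q2 {U,C,D,E,F}"
  and nz: "det3 C D E \<noteq> 0" "det3 C D F \<noteq> 0" "det3 C E F \<noteq> 0" "det3 D E F \<noteq> 0"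
  and pos: "det3 C D U * det3 C D V > 0" "det3 E F U * det3 E F V > 0"
     "det3 C E U * det3 C E V > 0" "det3 D F U * det3 D F V > 0"
     "det3 C F U * det3 C F V > 0" "det3 D E U * det3 D E V > 0"
  shows "inside_conic Q1 U \<longleftrightarrow> \<not> inside_conic Q2 V"
proof -
  define L where "L = symm (cr C D) (cr E F)"
  define M where "M = symm (cr C E) (cr D F)"
  define QY where "QY Y = qf L Y *\<^sub>R M - qf M Y *\<^sub>R L" for Y
  have qfL: "qf L X = det3 C D X * det3 E F X" for X
    by (simp add: L_def qf_bl bl_symm det3_cr)
  have qfM: "qf M X = det3 C E X * det3 D F X" for X
    by (simp add: M_def qf_bl bl_symm det3_cr)
  have blL: "bl L Y Z = (det3 C D Y * det3 E F Z + det3 C D Z * det3 E F Y)/2" for Y Z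
    by (simp add: L_def bl_symm det3_cr)
  have blM: "bl M Y Z = (det3 C E Y * det3 D F Z + det3 C E Z * det3 D F Y)/2" for Y Z
    by (simp add: M_def bl_symm det3_cr)
  have blQY: "bl (QY Y) Z W = qf L Y * bl M Z W - qf M Y * bl L Z W" for Y Z W
    by (simp add: QY_def bl_lin)
  have qfQY: "qf (QY Y) X = qf L Y * qf M X - qf M Y * qf L X" for Y X
    by (simp add: QY_def qf_lin)
  have trQY: "transpose (QY Y) = QY Y" for Y
    by (simp add: QY_def transpose_diff' transpose_scalar L_def M_def transpose_symm)
  have s1: "det3 C E D = - det3 C D E" "det3 D F C = det3 C D F" "det3 D F E = - det3 D E F"
     "det3 E F D = det3 D E F" "det3 E F C = det3 C E F"
    by (simp_all add: det3_def algebra_simps)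
  have bCD: "bl (QY Y) C D = - (det3 C D Y * det3 E F Y) * det3 C D E * det3 C D F / 2" for Y
    by (simp add: blQY blL blM qfL qfM s1)
  have bDE: "bl (QY Y) D E = - (det3 C F Y * det3 D E Y) * det3 C D E * det3 D E F / 2" for Y
  proof -
    have r: "bl (QY Y) D E = (det3 C D Y * det3 E F Y - det3 C E Y * det3 D F Y) * (det3 C D E * det3 D E F) / 2"
      by (simp add: blQY blL blM qfL qfM s1 left_diff_distrib)
    have p: "det3 C D Y * det3 E F Y - det3 C E Y * det3 D F Y = - (det3 C F Y * det3 D E Y)"
      using pluecker[of C D Y E F] by linarith
    show ?thesis unfolding r p by simp
  qed
  have bCE: "bl (QY Y) C E = - (det3 C E Y * det3 D F Y) * det3 C D E * det3 C E F / 2" for Y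
    by (simp add: blQY blL blM qfL qfM s1)
  have nzU: "det3 C D U \<noteq> 0" "det3 E F U \<noteq> 0" "det3 C E U \<noteq> 0" "det3 D F U \<noteq> 0"
     "det3 C F U \<noteq> 0" "det3 D E U \<noteq> 0" using pos by auto
  have nzV: "det3 C D V \<noteq> 0" "det3 E F V \<noteq> 0" "det3 C E V \<noteq> 0" "det3 D F V \<noteq> 0"
     "det3 C F V \<noteq> 0" "det3 D E V \<noteq> 0" using pos by auto
  have QYnz: "QY Y \<noteq> 0" if "det3 C D Y \<noteq> 0" "det3 E F Y \<noteq> 0" for Y
  proof
    assume "QY Y = 0"
    then have "bl (QY Y) C D = 0" by (simp add: bl_def)
    then show False using that nz by (simp add: bCD)
  qed
  have conV: "conic_through (QY V) {V,C,D,E,F}"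
    using QYnz[OF nzV(1,2)] trQY by (simp add: conic_through_def qfQY qfL qfM)
  have conU: "conic_through (QY U) {U,C,D,E,F}"
    using QYnz[OF nzU(1,2)] trQY by (simp add: conic_through_def qfQY qfL qfM)
  obtain c1 where c1: "c1 \<noteq> 0" "Q1 = c1 *\<^sub>R QY V" "qf (QY V) U \<noteq> 0"
    using uniq[of U "{V,C,D,E,F}" Q1 "QY V"] no6 q1 conV by auto
  obtain c2 where c2: "c2 \<noteq> 0" "Q2 = c2 *\<^sub>R QY U"
    using uniq[of V "{U,C,D,E,F}" Q2 "QY U"] no6 q2 conU by (auto simp: insert_commute)
  define PV where "PV = bl (QY V) C D * bl (QY V) D E * bl (QY V) C E * qf (QY V) U"
  define PU where "PU = bl (QY U) C D * bl (QY U) D E * bl (QY U) C E * qf (QY U) V"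
  have "inside_conic Q1 U \<longleftrightarrow> bl Q1 C D * bl Q1 D E * bl Q1 C E * qf Q1 U > 0"
    using q1 nz by (intro inside_bl) auto
  also have "\<dots> \<longleftrightarrow> c1^4 * PV > 0"
    by (simp add: c1 bl_scale qf_scale PV_def power4_eq_xxxx mult_ac)
  also have "\<dots> \<longleftrightarrow> PV > 0" using c1 by (simp add: zero_less_mult_iff)
  finally have i1: "inside_conic Q1 U \<longleftrightarrow> PV > 0" .
  have "inside_conic Q2 V \<longleftrightarrow> bl Q2 C D * bl Q2 D E * bl Q2 C E * qf Q2 V > 0"
    using q2 nz by (intro inside_bl) auto
  also have "\<dots> \<longleftrightarrow> c2^4 * PU > 0"
    by (simp add: c2 bl_scale qf_scale PU_def power4_eq_xxxx mult_ac)
  also have "\<dots> \<longleftrightarrow> PU > 0" using c2 by (simp add: zero_less_mult_iff)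
  finally have i2: "inside_conic Q2 V \<longleftrightarrow> PU > 0" .
  define T where "T = qf (QY V) U"
  have TU: "qf (QY U) V = - T" by (simp add: T_def qfQY)
  define g where "g Y = det3 C D Y * det3 E F Y * det3 C E Y * det3 D F Y * det3 C F Y * det3 D E Y" for Y
  define K where "K = (det3 C D E)^3 * det3 C D F * det3 C E F * det3 D E F / 8"
  have PV: "PV = - g V * K * T" unfolding PV_def T_def[symmetric] bCD bDE bCE g_def K_def
    by (simp add: power3_eq_cube)
  have PU: "PU = g U * K * T" unfolding PU_def TU bCD bDE bCE g_def K_def
    by (simp add: power3_eq_cube)
  have gg: "g U * g V > 0"
  proof -
    have "g U * g V = (det3 C D U * det3 C D V) * (det3 E F U * det3 E F V) * (det3 C E U * det3 C E V)
       * (det3 D F U * det3 D F V) * (det3 C F U * det3 C F V) * (det3 D E U * det3 D E V)"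
      by (simp add: g_def mult_ac)
    also have "\<dots> > 0"
      by (rule mult_pos_pos[OF mult_pos_pos[OF mult_pos_pos[OF mult_pos_pos[OF mult_pos_pos[OF pos(1) pos(2)] pos(3)] pos(4)] pos(5)] pos(6)])
    finally show ?thesis .
  qed
  have KT: "K * T \<noteq> 0" using nz c1(3) by (simp add: K_def T_def)
  have "PV * PU = - (g U * g V) * (K * T)^2" by (simp add: PV PU power2_eq_square)
  also have "\<dots> < 0" using gg KT by (simp add: mult_pos_pos)
  finally have "PV * PU < 0" .
  then show ?thesis using i1 i2 by (auto simp: mult_less_0_iff)
qed

lemma pl3: "det3 x e v * det3 x w z - det3 x e w * det3 x v z + det3 x e z * det3 x v w = 0"
  by (simp add: det3_def algebra_simps)

lemma step_pos:
  fixes s A B X K MK JM :: real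
  assumes ss: "s * s = 1" and pl: "A * MK - B * X + K * JM = 0"
    and "s * A > 0" "s * B > 0" "s * K > 0" "s * MK > 0" "s * JM > 0"
  shows "s * X > 0"
proof -
  have "(s * B)*(s * X) = (s * s)*(B*X)" by (simp add: mult_ac)
  also have "B*X = A*MK + K*JM" using pl by simp
  also have "(s * s)*(A*MK + K*JM) = (s * A)*(s * MK) + (s * K)*(s * JM)" by (simp add: algebra_simps)
  finally have "(s * B)*(s * X) = (s * A)*(s * MK) + (s * K)*(s * JM)" .
  moreover have "(s * A)*(s * MK) + (s * K)*(s * JM) > 0" using assms by (simp add: add_pos_pos)
  ultimately have "(s * B)*(s * X) > 0" by simp
  then show ?thesis using assms(4) by (simp add: zero_less_mult_iff)
qed

lemma chiro:
  fixes y :: "nat \<Rightarrow> real^3"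
  assumes edge: "\<forall>i<7. (\<forall>k<7. k \<noteq> i \<and> k \<noteq> (i+1) mod 7 \<longrightarrow> det3 (y i) (y ((i+1) mod 7)) (y k) > 0) \<or>
        (\<forall>k<7. k \<noteq> i \<and> k \<noteq> (i+1) mod 7 \<longrightarrow> det3 (y i) (y ((i+1) mod 7)) (y k) < 0)"
  shows "\<exists>s::real. (s = 1 \<or> s = -1) \<and> (\<forall>i j k. i<j \<longrightarrow> j<k \<longrightarrow> k<7 \<longrightarrow> s * det3 (y i) (y j) (y k) > 0)"
proof -
  define s :: real where "s = (if (\<forall>k<7. k \<noteq> 0 \<and> k \<noteq> 1 \<longrightarrow> det3 (y 0) (y 1) (y k) > 0) then 1 else -1)"
  have s: "s = 1 \<or> s = -1" by (simp add: s_def)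
  have ss: "s * s = 1" using s by auto
  have E: "\<forall>k<7. k \<noteq> i \<and> k \<noteq> (i+1) mod 7 \<longrightarrow> s * det3 (y i) (y ((i+1) mod 7)) (y k) > 0" if "i<7" for i
    using that
  proof (induction i)
    case 0
    show ?case using edge[rule_format, of 0] by (auto simp: s_def mult_less_0_iff)
  next
    case (Suc i)
    then have i6: "i < 6" by simp
    have IH: "\<forall>k<7. k \<noteq> i \<and> k \<noteq> i+1 \<longrightarrow> s * det3 (y i) (y (i+1)) (y k) > 0"
      using Suc.IH i6 by simp
    have h1: "(i+2) mod 7 < 7" "(i+2) mod 7 \<noteq> i" "(i+2) mod 7 \<noteq> i+1" using i6 by presburger+
    have k: "s * det3 (y i) (y (i+1)) (y ((i+2) mod 7)) > 0" using IH h1 by blast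
    have c: "det3 (y (Suc i)) (y ((Suc i + 1) mod 7)) (y i) = det3 (y i) (y (i+1)) (y ((i+2) mod 7))"
      using det3_cyc[of "y (i+1)" "y ((i+2) mod 7)" "y i"] by simp
    have h2: "i \<noteq> Suc i" "i \<noteq> (Suc i + 1) mod 7" "i < 7" using i6 by presburger+
    from edge[rule_format, OF Suc.prems] show ?case
    proof
      assume a: "\<forall>k<7. k \<noteq> Suc i \<and> k \<noteq> (Suc i + 1) mod 7 \<longrightarrow> det3 (y (Suc i)) (y ((Suc i + 1) mod 7)) (y k) > 0"
      then have "det3 (y i) (y (i+1)) (y ((i+2) mod 7)) > 0" using h2 c by metis
      then have "s = 1" using k s by (auto simp: mult_less_0_iff)
      then show ?thesis using a by simp
    next
      assume a: "\<forall>k<7. k \<noteq> Suc i \<and> k \<noteq> (Suc i + 1) mod 7 \<longrightarrow> det3 (y (Suc i)) (y ((Suc i + 1) mod 7)) (y k) < 0"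
      then have "det3 (y i) (y (i+1)) (y ((i+2) mod 7)) < 0" using h2 c by metis
      then have "s = -1" using k s by (auto simp: zero_less_mult_iff)
      then show ?thesis using a by simp
    qed
  qed
  have E': "s * det3 (y i) (y (i+1)) (y k) > 0" if "i+1<7" "k<7" "k \<noteq> i" "k \<noteq> i+1" for i k
    using E[of i] that by simp
  have F: "s * det3 (y i) (y j) (y (j+d+1)) > 0" if "i<j" "j+d+1<7" for d i j
    using that
  proof (induction d arbitrary: i j)
    case 0
    have "s * det3 (y j) (y (j+1)) (y i) > 0" using 0 by (intro E') auto
    then show ?case using det3_cyc[of "y j" "y (j+1)" "y i"] by simp
  next
    case (Suc d)
    show ?case
    proof (cases "j = i+1")
      case True
      then show ?thesis using Suc.prems E'[of i "j + Suc d + 1"] by simp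
    next
      case False
      define m where "m = j+1"
      define k where "k = j + Suc d + 1"
      have km: "k = m + d + 1" by (simp add: k_def m_def)
      have IH: "s * det3 (y i) (y m) (y k) > 0" using Suc.IH[of i m] Suc.prems km m_def by simp
      have a1: "s * det3 (y i) (y (i+1)) (y j) > 0" using Suc.prems False by (intro E') auto
      have a2: "s * det3 (y i) (y (i+1)) (y m) > 0" using Suc.prems False m_def by (intro E') auto
      have a3: "s * det3 (y i) (y (i+1)) (y k) > 0" using Suc.prems False k_def by (intro E') auto
      have "s * det3 (y j) (y (j+1)) (y i) > 0" using Suc.prems by (intro E') auto
      then have a4: "s * det3 (y i) (y j) (y m) > 0" using det3_cyc[of "y j" "y (j+1)" "y i"] m_def by simp
      have "s * det3 (y i) (y j) (y k) > 0"
        by (rule step_pos[OF ss pl3[of "y i" "y (i+1)" "y j" "y m" "y k"] a1 a2 a3 IH a4])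
      then show ?thesis by (simp add: k_def)
    qed
  qed
  have "\<forall>i j k. i<j \<longrightarrow> j<k \<longrightarrow> k<7 \<longrightarrow> s * det3 (y i) (y j) (y k) > 0"
  proof (intro allI impI)
    fix i j k :: nat assume "i<j" "j<k" "k<7"
    then show "s * det3 (y i) (y j) (y k) > 0" using F[of i j "k - j - 1"] by simp
  qed
  then show ?thesis using s by blast
qed

definition tau :: "nat \<Rightarrow> nat \<Rightarrow> nat \<Rightarrow> real" where
  "tau i j k = (if i<j then 1 else -1) * (if j<k then 1 else -1) * (if i<k then 1 else -1)"

lemma tau_lemma:
  fixes y :: "nat \<Rightarrow> real^3"
  assumes ch: "\<forall>i j k. i<j \<longrightarrow> j<k \<longrightarrow> k<7 \<longrightarrow> s * det3 (y i) (y j) (y k) > 0"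
    and "i<7" "j<7" "k<7" "i\<noteq>j" "j\<noteq>k" "i\<noteq>k"
  shows "s * tau i j k * det3 (y i) (y j) (y k) > 0"
proof -
  have sw: "det3 x z w = - det3 x w z" "det3 w x z = - det3 x w z" "det3 w z x = det3 x w z" "det3 z x w = det3 x w z"
    for x w z :: "real^3" by (simp_all add: det3_def algebra_simps)
  consider "i<j" "j<k" | "i<k" "k<j" | "j<i" "i<k" | "j<k" "k<i" | "k<i" "i<j" | "k<j" "j<i"
    using assms by linarith
  then show ?thesis
  proof cases
    case 1 then show ?thesis using ch assms by (simp add: tau_def)
  next
    case 2 then show ?thesis using ch[rule_format, of i k j] assms sw(1)[of "y i" "y j" "y k"] by (simp add: tau_def)
  next
    case 3 then show ?thesis using ch[rule_format, of j i k] assms sw(2)[of "y j" "y i" "y k"] by (simp add: tau_def)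
  next
    case 4
    have "s * det3 (y j) (y k) (y i) > 0" using ch 4 assms by simp
    moreover have "det3 (y j) (y k) (y i) = det3 (y i) (y j) (y k)" by (rule det3_cyc)
    ultimately show ?thesis using 4 by (simp add: tau_def)
  next
    case 5
    have "s * det3 (y k) (y i) (y j) > 0" using ch 5 assms by simp
    moreover have "det3 (y k) (y i) (y j) = det3 (y i) (y j) (y k)" by (simp add: det3_def algebra_simps)
    ultimately show ?thesis using 5 by (simp add: tau_def)
  next
    case 6 then show ?thesis using ch[rule_format, of k j i] assms by (simp add: tau_def det3_def algebra_simps)
  qed
qed

lemma pair_lemma:
  fixes y :: "nat \<Rightarrow> real^3"
  assumes ch: "\<forall>i j k. i<j \<longrightarrow> j<k \<longrightarrow> k<7 \<longrightarrow> s * det3 (y i) (y j) (y k) > 0"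
    and s: "s = 1 \<or> s = -1"
    and "u<7" "c<7" "d<7" "c\<noteq>d" "c \<noteq> u" "d \<noteq> u" "c \<noteq> (u+1) mod 7" "d \<noteq> (u+1) mod 7"
  shows "det3 (y c) (y d) (y u) * det3 (y c) (y d) (y ((u+1) mod 7)) > 0"
proof -
  have t: "tau c d u = tau c d ((u+1) mod 7)"
  proof (cases "u = 6")
    case True then show ?thesis using assms by (auto simp: tau_def)
  next
    case False then have "(u+1) mod 7 = u+1" using assms by simp
    then show ?thesis using assms by (auto simp: tau_def)
  qed
  have p1: "s * tau c d u * det3 (y c) (y d) (y u) > 0" using assms by (intro tau_lemma[OF ch]) auto
  have p2: "s * tau c d u * det3 (y c) (y d) (y ((u+1) mod 7)) > 0" unfolding t using assms by (intro tau_lemma[OF ch]) auto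
  have tt: "tau c d u * tau c d u = 1" by (simp add: tau_def)
  have "(s * tau c d u * det3 (y c) (y d) (y u)) * (s * tau c d u * det3 (y c) (y d) (y ((u+1) mod 7)))
     = (s * s) * (tau c d u * tau c d u) * (det3 (y c) (y d) (y u) * det3 (y c) (y d) (y ((u+1) mod 7)))"
    by (simp add: mult_ac)
  also have "\<dots> = det3 (y c) (y d) (y u) * det3 (y c) (y d) (y ((u+1) mod 7))" using s tt by auto
  finally show ?thesis using p1 p2 by (metis mult_pos_pos)
qed

lemma nz_lemma:
  fixes y :: "nat \<Rightarrow> real^3"
  assumes ch: "\<forall>i j k. i<j \<longrightarrow> j<k \<longrightarrow> k<7 \<longrightarrow> s * det3 (y i) (y j) (y k) > 0"
    and "i<7" "j<7" "k<7" "i\<noteq>j" "j\<noteq>k" "i\<noteq>k"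
  shows "det3 (y i) (y j) (y k) \<noteq> 0"
  using tau_lemma[OF assms] by auto

lemma conic_exists:
  assumes "det3 C D V \<noteq> 0" "det3 E F V \<noteq> 0" "det3 C D E \<noteq> 0" "det3 C D F \<noteq> 0"
  shows "\<exists>Q. conic_through Q {V,C,D,E,F}"
proof -
  define L where "L = symm (cr C D) (cr E F)"
  define M where "M = symm (cr C E) (cr D F)"
  define QY where "QY = qf L V *\<^sub>R M - qf M V *\<^sub>R L"
  have qfL: "qf L X = det3 C D X * det3 E F X" for X
    by (simp add: L_def qf_bl bl_symm det3_cr)
  have qfM: "qf M X = det3 C E X * det3 D F X" for X
    by (simp add: M_def qf_bl bl_symm det3_cr)
  have blL: "bl L Y Z = (det3 C D Y * det3 E F Z + det3 C D Z * det3 E F Y)/2" for Y Z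
    by (simp add: L_def bl_symm det3_cr)
  have blM: "bl M Y Z = (det3 C E Y * det3 D F Z + det3 C E Z * det3 D F Y)/2" for Y Z
    by (simp add: M_def bl_symm det3_cr)
  have s1: "det3 C E D = - det3 C D E" "det3 D F C = det3 C D F"
    by (simp_all add: det3_def algebra_simps)
  have bCD: "bl QY C D = - (det3 C D V * det3 E F V) * det3 C D E * det3 C D F / 2"
    by (simp add: QY_def bl_lin blL blM qfL qfM s1)
  have "QY \<noteq> 0"
  proof
    assume "QY = 0"
    then have "bl QY C D = 0" by (simp add: bl_def)
    then show False using assms by (simp add: bCD)
  qed
  moreover have "transpose QY = QY"
    by (simp add: QY_def transpose_diff' transpose_scalar L_def M_def transpose_symm)
  ultimately have "conic_through QY {V,C,D,E,F}"
    by (simp add: conic_through_def QY_def qf_lin qfL qfM)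
  then show ?thesis by blast
qed

lemma Alt_gen:
  fixes y :: "nat \<Rightarrow> real^3"
  assumes ch: "\<forall>i j k. i<j \<longrightarrow> j<k \<longrightarrow> k<7 \<longrightarrow> s * det3 (y i) (y j) (y k) > 0"
    and s: "s = 1 \<or> s = -1"
    and no6: "\<And>Q. conic_through Q (y ` ({0..<7} - {j})) \<Longrightarrow> False"
    and u: "u<7" and j: "j<7" "j\<noteq>u" "j\<noteq>(u+1) mod 7"
  shows "dd y u j + dd y ((u+1) mod 7) j = 1"
proof -
  define v where "v = (u+1) mod 7"
  have v: "v < 7" "v \<noteq> u" "j \<noteq> v" using u j unfolding v_def by presburger+
  define S4 where "S4 = {0..<7} - {u,v,j}"
  have "card S4 = card {0..<(7::nat)} - card {u,v,j}"
    unfolding S4_def using u v j by (intro card_Diff_subset) auto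
  then have c4: "card S4 = 4" using v j by simp
  then have "S4 \<noteq> {}" by auto
  then obtain c where c: "c \<in> S4" by blast
  have "card (S4 - {c}) = 3" using c c4 by (simp add: S4_def)
  then obtain d e f where def: "S4 - {c} = {d,e,f}" "d \<noteq> e" "e \<noteq> f" "d \<noteq> f"
    by (auto simp: card_3_iff)
  have S4: "S4 = {c,d,e,f}" "c \<notin> {d,e,f}" using def c by auto
  have inS: "c \<in> S4" "d \<in> S4" "e \<in> S4" "f \<in> S4" by (simp_all add: S4(1))
  have mem: "c < 7" "d < 7" "e < 7" "f < 7" "c \<noteq> u" "d \<noteq> u" "e \<noteq> u" "f \<noteq> u"
     "c \<noteq> v" "d \<noteq> v" "e \<noteq> v" "f \<noteq> v"
    using inS unfolding S4_def by simp_all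
  have A1: "{0..<7} - {u,j} = insert v S4" unfolding S4_def using v by auto
  have A2: "{0..<7} - {v,j} = insert u S4" unfolding S4_def using v u j by auto
  have A3: "{0..<7} - {j} = insert u (insert v S4)" unfolding S4_def using v u j by auto
  have set1: "{0..<7} - {u,j} = {v,c,d,e,f}" using A1 S4(1) by simp
  have set2: "{0..<7} - {v,j} = {u,c,d,e,f}" using A2 S4(1) by simp
  have set3: "{0..<7} - {j} = {u,v,c,d,e,f}" using A3 S4(1) by simp
  have dist: "c \<noteq> d" "c \<noteq> e" "c \<noteq> f" "d \<noteq> e" "d \<noteq> f" "e \<noteq> f" using S4(2) def(2-4) by auto
  have nz: "det3 (y c) (y d) (y e) \<noteq> 0" "det3 (y c) (y d) (y f) \<noteq> 0"
      "det3 (y c) (y e) (y f) \<noteq> 0" "det3 (y d) (y e) (y f) \<noteq> 0"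
    by (rule nz_lemma[OF ch]; use dist mem in simp)+
  have pr: "det3 (y a) (y b) (y u) * det3 (y a) (y b) (y v) > 0"
    if "a < 7" "b < 7" "a \<noteq> u" "b \<noteq> u" "a \<noteq> v" "b \<noteq> v" "a \<noteq> b" for a b
    unfolding v_def by (rule pair_lemma[OF ch s u]) (use that in \<open>simp_all add: v_def\<close>)
  have prs: "det3 (y c) (y d) (y u) * det3 (y c) (y d) (y v) > 0"
     "det3 (y e) (y f) (y u) * det3 (y e) (y f) (y v) > 0"
     "det3 (y c) (y e) (y u) * det3 (y c) (y e) (y v) > 0"
     "det3 (y d) (y f) (y u) * det3 (y d) (y f) (y v) > 0"
     "det3 (y c) (y f) (y u) * det3 (y c) (y f) (y v) > 0"
     "det3 (y d) (y e) (y u) * det3 (y d) (y e) (y v) > 0"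
    by (rule pr; use dist mem in simp)+
  have nzU: "det3 (y c) (y d) (y u) \<noteq> 0" "det3 (y e) (y f) (y u) \<noteq> 0"
    using prs(1,2) by auto
  have nzV: "det3 (y c) (y d) (y v) \<noteq> 0" "det3 (y e) (y f) (y v) \<noteq> 0"
    using prs(1,2) by auto
  have ex1: "\<exists>Q. conic_through Q (y ` ({0..<7} - {u,j}))"
    unfolding set1 using conic_exists[OF nzV nz(1,2)] by simp
  have ex2: "\<exists>Q. conic_through Q (y ` ({0..<7} - {v,j}))"
    unfolding set2 using conic_exists[OF nzU nz(1,2)] by simp
  have q1: "conic_through (Qc y u j) {y v, y c, y d, y e, y f}"
    using someI_ex[OF ex1] unfolding Qc_def set1 by simp
  have q2: "conic_through (Qc y v j) {y u, y c, y d, y e, y f}"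
    using someI_ex[OF ex2] unfolding Qc_def set2 by simp
  have n6: "\<And>Q. conic_through Q {y u, y v, y c, y d, y e, y f} \<Longrightarrow> False"
    using no6 unfolding set3 by simp
  have "inside_conic (Qc y u j) (y u) \<longleftrightarrow> \<not> inside_conic (Qc y v j) (y v)"
    by (rule G[OF n6 q1 q2 nz prs])
  then show ?thesis unfolding v_def[symmetric] dd_def by auto
qed

lemma final_sum:
  fixes f :: "nat \<Rightarrow> nat \<Rightarrow> nat"
  assumes H: "\<And>j. j<7 \<Longrightarrow> j\<noteq>i \<Longrightarrow> j \<noteq> (i+1) mod 7 \<Longrightarrow> f i j + f ((i+1) mod 7) j = 1"
    and i: "i<7"
  shows "sum (f i) ({0..<7}-{i}) + sum (f ((i+1) mod 7)) ({0..<7}-{(i+1) mod 7})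
     = f i ((i+1) mod 7) + f ((i+1) mod 7) i + 5"
proof -
  have r: "sum g ({0..<7}-{k}) + g k = sum g {0..<7}" if "k<7" for g :: "nat \<Rightarrow> nat" and k
    using sum.remove[of "{0..<7}" k g] that by simp
  have e: "sum (g::nat\<Rightarrow>nat) {0..<7} = g 0 + g 1 + g 2 + g 3 + g 4 + g 5 + g 6" for g
    by (simp add: eval_nat_numeral atLeast0LessThan lessThan_Suc)
  have m0: "(0+1) mod 7 = (1::nat)" by simp
  have m1: "(1+1) mod 7 = (2::nat)" by simp
  have m2: "(2+1) mod 7 = (3::nat)" by simp
  have m3: "(3+1) mod 7 = (4::nat)" by simp
  have m4: "(4+1) mod 7 = (5::nat)" by simp
  have m5: "(5+1) mod 7 = (6::nat)" by simp
  have m6: "(6+1) mod 7 = (0::nat)" by simp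
  have "i = 0 \<or> i = 1 \<or> i = 2 \<or> i = 3 \<or> i = 4 \<or> i = 5 \<or> i = 6" using i by linarith
  moreover
  { assume "i = 0"
    have "sum (f 0) ({0..<7}-{0}) + f 0 0 = sum (f 0) {0..<7}" by (simp add: r)
    moreover have "sum (f 1) ({0..<7}-{1}) + f 1 1 = sum (f 1) {0..<7}" by (simp add: r)
    moreover have "f 0 2 + f 1 2 + f 0 3 + f 1 3 + f 0 4 + f 1 4 + f 0 5 + f 1 5 + f 0 6 + f 1 6 = 5"
      using H[of 2, unfolded \<open>i = 0\<close>, unfolded m0] H[of 3, unfolded \<open>i = 0\<close>, unfolded m0] H[of 4, unfolded \<open>i = 0\<close>, unfolded m0] H[of 5, unfolded \<open>i = 0\<close>, unfolded m0] H[of 6, unfolded \<open>i = 0\<close>, unfolded m0] by simp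
    ultimately have ?thesis unfolding \<open>i = 0\<close> m0 by (simp add: e) }
  moreover
  { assume "i = 1"
    have "sum (f 1) ({0..<7}-{1}) + f 1 1 = sum (f 1) {0..<7}" by (simp add: r)
    moreover have "sum (f 2) ({0..<7}-{2}) + f 2 2 = sum (f 2) {0..<7}" by (simp add: r)
    moreover have "f 1 0 + f 2 0 + f 1 3 + f 2 3 + f 1 4 + f 2 4 + f 1 5 + f 2 5 + f 1 6 + f 2 6 = 5"
      using H[of 0, unfolded \<open>i = 1\<close>, unfolded m1] H[of 3, unfolded \<open>i = 1\<close>, unfolded m1] H[of 4, unfolded \<open>i = 1\<close>, unfolded m1] H[of 5, unfolded \<open>i = 1\<close>, unfolded m1] H[of 6, unfolded \<open>i = 1\<close>, unfolded m1] by simp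
    ultimately have ?thesis unfolding \<open>i = 1\<close> m1 by (simp add: e) }
  moreover
  { assume "i = 2"
    have "sum (f 2) ({0..<7}-{2}) + f 2 2 = sum (f 2) {0..<7}" by (simp add: r)
    moreover have "sum (f 3) ({0..<7}-{3}) + f 3 3 = sum (f 3) {0..<7}" by (simp add: r)
    moreover have "f 2 0 + f 3 0 + f 2 1 + f 3 1 + f 2 4 + f 3 4 + f 2 5 + f 3 5 + f 2 6 + f 3 6 = 5"
      using H[of 0, unfolded \<open>i = 2\<close>, unfolded m2] H[of 1, unfolded \<open>i = 2\<close>, unfolded m2] H[of 4, unfolded \<open>i = 2\<close>, unfolded m2] H[of 5, unfolded \<open>i = 2\<close>, unfolded m2] H[of 6, unfolded \<open>i = 2\<close>, unfolded m2] by simp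
    ultimately have ?thesis unfolding \<open>i = 2\<close> m2 by (simp add: e) }
  moreover
  { assume "i = 3"
    have "sum (f 3) ({0..<7}-{3}) + f 3 3 = sum (f 3) {0..<7}" by (simp add: r)
    moreover have "sum (f 4) ({0..<7}-{4}) + f 4 4 = sum (f 4) {0..<7}" by (simp add: r)
    moreover have "f 3 0 + f 4 0 + f 3 1 + f 4 1 + f 3 2 + f 4 2 + f 3 5 + f 4 5 + f 3 6 + f 4 6 = 5"
      using H[of 0, unfolded \<open>i = 3\<close>, unfolded m3] H[of 1, unfolded \<open>i = 3\<close>, unfolded m3] H[of 2, unfolded \<open>i = 3\<close>, unfolded m3] H[of 5, unfolded \<open>i = 3\<close>, unfolded m3] H[of 6, unfolded \<open>i = 3\<close>, unfolded m3] by simp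
    ultimately have ?thesis unfolding \<open>i = 3\<close> m3 by (simp add: e) }
  moreover
  { assume "i = 4"
    have "sum (f 4) ({0..<7}-{4}) + f 4 4 = sum (f 4) {0..<7}" by (simp add: r)
    moreover have "sum (f 5) ({0..<7}-{5}) + f 5 5 = sum (f 5) {0..<7}" by (simp add: r)
    moreover have "f 4 0 + f 5 0 + f 4 1 + f 5 1 + f 4 2 + f 5 2 + f 4 3 + f 5 3 + f 4 6 + f 5 6 = 5"
      using H[of 0, unfolded \<open>i = 4\<close>, unfolded m4] H[of 1, unfolded \<open>i = 4\<close>, unfolded m4] H[of 2, unfolded \<open>i = 4\<close>, unfolded m4] H[of 3, unfolded \<open>i = 4\<close>, unfolded m4] H[of 6, unfolded \<open>i = 4\<close>, unfolded m4] by simp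
    ultimately have ?thesis unfolding \<open>i = 4\<close> m4 by (simp add: e) }
  moreover
  { assume "i = 5"
    have "sum (f 5) ({0..<7}-{5}) + f 5 5 = sum (f 5) {0..<7}" by (simp add: r)
    moreover have "sum (f 6) ({0..<7}-{6}) + f 6 6 = sum (f 6) {0..<7}" by (simp add: r)
    moreover have "f 5 0 + f 6 0 + f 5 1 + f 6 1 + f 5 2 + f 6 2 + f 5 3 + f 6 3 + f 5 4 + f 6 4 = 5"
      using H[of 0, unfolded \<open>i = 5\<close>, unfolded m5] H[of 1, unfolded \<open>i = 5\<close>, unfolded m5] H[of 2, unfolded \<open>i = 5\<close>, unfolded m5] H[of 3, unfolded \<open>i = 5\<close>, unfolded m5] H[of 4, unfolded \<open>i = 5\<close>, unfolded m5] by simp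
    ultimately have ?thesis unfolding \<open>i = 5\<close> m5 by (simp add: e) }
  moreover
  { assume "i = 6"
    have "sum (f 6) ({0..<7}-{6}) + f 6 6 = sum (f 6) {0..<7}" by (simp add: r)
    moreover have "sum (f 0) ({0..<7}-{0}) + f 0 0 = sum (f 0) {0..<7}" by (simp add: r)
    moreover have "f 6 1 + f 0 1 + f 6 2 + f 0 2 + f 6 3 + f 0 3 + f 6 4 + f 0 4 + f 6 5 + f 0 5 = 5"
      using H[of 1, unfolded \<open>i = 6\<close>, unfolded m6] H[of 2, unfolded \<open>i = 6\<close>, unfolded m6] H[of 3, unfolded \<open>i = 6\<close>, unfolded m6] H[of 4, unfolded \<open>i = 6\<close>, unfolded m6] H[of 5, unfolded \<open>i = 6\<close>, unfolded m6] by simp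
    ultimately have ?thesis unfolding \<open>i = 6\<close> m6 by (simp add: e) }
  ultimately show ?thesis by blast
qed

lemma qf_scaleR_v: "qf Q (c *\<^sub>R v) = c^2 * qf Q v"
  by (simp add: qf_def matrix_vector_mult_scaleR power2_eq_square)

lemma pos_mult_iff: "c > 0 \<Longrightarrow> 0 < c * x \<longleftrightarrow> 0 < (x::real)"
  by (simp add: zero_less_mult_iff)

theorem lemma3p5:
  fixes p :: "nat \<Rightarrow> real^3" and i :: nat
  assumes "typical7 p" and "cyclic_heptagonal p" and "i < 7"
  shows "(internal_edge p i \<longrightarrow> dom_index p i + dom_index p ((i+1) mod 7) = 5) \<and>
         (external_edge p i \<longrightarrow> dom_index p i + dom_index p ((i+1) mod 7) = 7)"
proof -
  obtain a :: "real^3" where a: "\<forall>i<7. a \<bullet> p i \<noteq> 0" and edge: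
    "\<forall>i<7.
        (\<forall>k<7. k \<noteq> i \<and> k \<noteq> (i+1) mod 7 \<longrightarrow>
            det3 (chart a (p i)) (chart a (p ((i+1) mod 7))) (chart a (p k)) > 0) \<or>
        (\<forall>k<7. k \<noteq> i \<and> k \<noteq> (i+1) mod 7 \<longrightarrow>
            det3 (chart a (p i)) (chart a (p ((i+1) mod 7))) (chart a (p k)) < 0)"
    using assms(2) unfolding cyclic_heptagonal_def by blast
  define y where "y k = chart a (p k)" for k
  have edge': "\<forall>i<7. (\<forall>k<7. k \<noteq> i \<and> k \<noteq> (i+1) mod 7 \<longrightarrow> det3 (y i) (y ((i+1) mod 7)) (y k) > 0) \<or>
        (\<forall>k<7. k \<noteq> i \<and> k \<noteq> (i+1) mod 7 \<longrightarrow> det3 (y i) (y ((i+1) mod 7)) (y k) < 0)"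
    unfolding y_def using edge .
  obtain s where s: "s = 1 \<or> s = -1"
    and ch: "\<forall>i j k. i<j \<longrightarrow> j<k \<longrightarrow> k<7 \<longrightarrow> s * det3 (y i) (y j) (y k) > 0"
    using chiro[OF edge'] by blast
  have qy: "qf Q (y k) = (1 / (a \<bullet> p k))^2 * qf Q (p k)" for Q k
    by (simp add: y_def chart_def qf_scaleR_v)
  have cpos: "(1 / (a \<bullet> p k))^2 > 0" if "k < 7" for k
    using a that by simp
  have qfy: "qf Q (y k) = 0 \<longleftrightarrow> qf Q (p k) = 0" if "k<7" for Q k
    using cpos[OF that] by (simp add: qy)
  have ct: "conic_through Q (y`S) \<longleftrightarrow> conic_through Q (p`S)" if "S \<subseteq> {0..<7}" for Q S
  proof -
    have k: "\<forall>k\<in>S. (qf Q (y k) = 0) = (qf Q (p k) = 0)"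
      using qfy that by (auto simp: subset_eq)
    have "(\<forall>v\<in>y`S. qf Q v = 0) \<longleftrightarrow> (\<forall>v\<in>p`S. qf Q v = 0)"
      using k by auto
    then show ?thesis unfolding conic_through_def by simp
  qed
  have Qc_eq: "Qc y u j = Qc p u j" for u j
  proof -
    have "(\<lambda>Q. conic_through Q (y ` ({0..<7} - {u,j}))) = (\<lambda>Q. conic_through Q (p ` ({0..<7} - {u,j})))"
      by (rule ext, rule ct) auto
    then show ?thesis unfolding Qc_def by simp
  qed
  have ins: "inside_conic Q (y k) \<longleftrightarrow> inside_conic Q (p k)" if "k<7" for Q k
  proof -
    have e: "det Q * qf Q (y k) = (1 / (a \<bullet> p k))^2 * (det Q * qf Q (p k))"
      by (simp add: qy mult_ac)
    show ?thesis unfolding inside_conic_def e by (rule pos_mult_iff[OF cpos[OF that]])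
  qed
  have dd_eq: "dd y u j = dd p u j" if "u<7" for u j
    unfolding dd_def Qc_eq ins[OF that] ..
  have no6: "False" if "j<7" "conic_through Q (y ` ({0..<7} - {j}))" for j Q
  proof -
    have c: "conic_through Q (p ` ({0..<7} - {j}))" using that ct[of "{0..<7} - {j}"] by auto
    have "card ({0..<7} - {j}) = 6" using that by simp
    then show False using assms(1) c unfolding typical7_def by blast
  qed
  have Alt: "dd p i j + dd p ((i+1) mod 7) j = 1" if "j<7" "j \<noteq> i" "j \<noteq> (i+1) mod 7" for j
  proof -
    have "dd y i j + dd y ((i+1) mod 7) j = 1"
      by (rule Alt_gen[OF ch s]) (use no6 that assms(3) in auto)
    moreover have "(i+1) mod 7 < 7" by simp
    ultimately show ?thesis using dd_eq assms(3) by simp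
  qed
  have sum: "dom_index p i + dom_index p ((i+1) mod 7) = dd p i ((i+1) mod 7) + dd p ((i+1) mod 7) i + 5"
    unfolding dom_index_def by (rule final_sum[OF Alt assms(3)])
  show ?thesis using sum unfolding internal_edge_def external_edge_def by simp
qed

end
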